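(* Let $R$ be a Noetherian commutative ring with unit. Then $(\mathrm{Id}^+(R),\tau^{\mathrm{con}},\le)$ and $(\mathrm{Id}(R),\tau^{\mathrm{con}},\le)$ are Noetherian Priestley spaces.
   Context: $\mathrm{Id}^+(R)$ is the set of all ideals of $R$ (including $R$) and $\mathrm{Id}(R)$ the set of proper ideals. Identifying an ideal with its characteristic function, these are closed subsets of $\{0,1\}^R$, and $\tau^{\mathrm{con}}$ is the induced product topology. The order is reverse inclusion: $\mathfrak A\le\mathfrak B$ iff $\mathfrak B\subseteq\mathfrak A$. A Priestley space is a partially ordered set with a quasi-compact topology such that whenever $y\not\le x$ there is a clopen down-set containing $x$ but not $y$; it is Noetherian if every decreasing sequence of closed down-sets is eventually stationary. *)

theory Defs
  imports "HOL-Analysis.Analysis"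
begin

definition is_ideal :: "('a::comm_ring_1) set \<Rightarrow> bool" where
  "is_ideal I \<longleftrightarrow> 0 \<in> I \<and> (\<forall>x\<in>I. \<forall>y\<in>I. x + y \<in> I) \<and> (\<forall>r x. x \<in> I \<longrightarrow> r * x \<in> I)"

definition noetherian_ring :: "('a::comm_ring_1) itself \<Rightarrow> bool" where
  "noetherian_ring _ \<longleftrightarrow>
     (\<forall>I :: nat \<Rightarrow> 'a set. (\<forall>n. is_ideal (I n)) \<and> (\<forall>n. I n \<subseteq> I (Suc n))
        \<longrightarrow> (\<exists>N. \<forall>n\<ge>N. I n = I N))"

text \<open>An ideal is identified with its characteristic function in {0,1}^R = 'a \<Rightarrow> bool.\<close>
definition Id_plus :: "('a::comm_ring_1 \<Rightarrow> bool) set" where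
  "Id_plus = {P. is_ideal (Collect P)}"

definition Id_proper :: "('a::comm_ring_1 \<Rightarrow> bool) set" where
  "Id_proper = {P. is_ideal (Collect P) \<and> Collect P \<noteq> UNIV}"

definition cantor_top :: "('a \<Rightarrow> bool) topology" where
  "cantor_top = product_topology (\<lambda>_. discrete_topology (UNIV :: bool set)) UNIV"

definition tau_con :: "('a::comm_ring_1 \<Rightarrow> bool) set \<Rightarrow> ('a \<Rightarrow> bool) topology" where
  "tau_con S = subtopology cantor_top S"

definition rev_incl :: "('a \<Rightarrow> bool) \<Rightarrow> ('a \<Rightarrow> bool) \<Rightarrow> bool" where
  "rev_incl A B \<longleftrightarrow> Collect B \<subseteq> Collect A"

definition down_set_in :: "'b set \<Rightarrow> ('b \<Rightarrow> 'b \<Rightarrow> bool) \<Rightarrow> 'b set \<Rightarrow> bool" where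
  "down_set_in S le U \<longleftrightarrow> U \<subseteq> S \<and> (\<forall>u\<in>U. \<forall>v\<in>S. le v u \<longrightarrow> v \<in> U)"

definition partial_order_in :: "'b set \<Rightarrow> ('b \<Rightarrow> 'b \<Rightarrow> bool) \<Rightarrow> bool" where
  "partial_order_in S le \<longleftrightarrow>
     (\<forall>x\<in>S. le x x) \<and>
     (\<forall>x\<in>S. \<forall>y\<in>S. le x y \<and> le y x \<longrightarrow> x = y) \<and>
     (\<forall>x\<in>S. \<forall>y\<in>S. \<forall>z\<in>S. le x y \<and> le y z \<longrightarrow> le x z)"

definition priestley_space :: "'b topology \<Rightarrow> ('b \<Rightarrow> 'b \<Rightarrow> bool) \<Rightarrow> bool" where
  "priestley_space X le \<longleftrightarrow>
     partial_order_in (topspace X) le \<and> compact_space X \<and>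
     (\<forall>x\<in>topspace X. \<forall>y\<in>topspace X. \<not> le y x \<longrightarrow>
        (\<exists>U. openin X U \<and> closedin X U \<and> down_set_in (topspace X) le U \<and> x \<in> U \<and> y \<notin> U))"

definition noetherian_priestley_space :: "'b topology \<Rightarrow> ('b \<Rightarrow> 'b \<Rightarrow> bool) \<Rightarrow> bool" where
  "noetherian_priestley_space X le \<longleftrightarrow> priestley_space X le \<and>
     (\<forall>C :: nat \<Rightarrow> 'b set. (\<forall>n. closedin X (C n) \<and> down_set_in (topspace X) le (C n))
        \<and> (\<forall>n. C (Suc n) \<subseteq> C n) \<longrightarrow> (\<exists>N. \<forall>n\<ge>N. C n = C N))"

end

theory Submission
  imports Defs
begin

lemma top_cantor[simp]: "topspace cantor_top = UNIV"
  by (auto simp: cantor_top_def)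

lemma coord_open: "openin cantor_top {P. P a}"
proof -
  have "openin cantor_top {x \<in> topspace cantor_top. x a \<in> {True}}"
    unfolding cantor_top_def
    by (rule openin_continuous_map_preimage[OF continuous_map_product_projection]) auto
  then show ?thesis by simp
qed

lemma coord_closed: "closedin cantor_top {P. P a}"
proof -
  have "closedin cantor_top {x \<in> topspace cantor_top. x a \<in> {True}}"
    unfolding cantor_top_def
    by (rule closedin_continuous_map_preimage[OF continuous_map_product_projection]) auto
  then show ?thesis by simp
qed

lemma coord_closed_neg: "closedin cantor_top {P. \<not> P a}"
proof -
  have "closedin cantor_top {x \<in> topspace cantor_top. x a \<in> {False}}"
    unfolding cantor_top_def
    by (rule closedin_continuous_map_preimage[OF continuous_map_product_projection]) auto
  then show ?thesis by simp
qed

lemma cantor_compact: "compact_space cantor_top"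
  unfolding cantor_top_def
  by (simp add: compact_space_product_topology compact_space_discrete_topology)

lemma Id_plus_closed: "closedin cantor_top (Id_plus :: ('a::comm_ring_1 \<Rightarrow> bool) set)"
proof -
  have eq: "(Id_plus :: ('a \<Rightarrow> bool) set) = {P. P 0}
     \<inter> \<Inter> ((\<lambda>(x,y). {P. \<not> P x} \<union> {P. \<not> P y} \<union> {P. P (x+y)}) ` UNIV)
     \<inter> \<Inter> ((\<lambda>(r,x). {P. \<not> P x} \<union> {P. P (r*x)}) ` UNIV)"
    by (auto simp: Id_plus_def is_ideal_def)
  show ?thesis unfolding eq
    apply (intro closedin_Int closedin_Inter closedin_Un coord_closed coord_closed_neg)
    apply (auto simp: case_prod_beta intro!: closedin_Un coord_closed coord_closed_neg)
    done
qed

lemma ideal_proper_iff: "(I \<noteq> UNIV) = (1 \<notin> I)" if "is_ideal I"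
proof
  assume "I \<noteq> UNIV" then show "1 \<notin> I" using that unfolding is_ideal_def
    by (metis UNIV_eq_I mult.right_neutral)
next
  assume "1 \<notin> I" then show "I \<noteq> UNIV" by auto
qed

lemma Id_proper_eq: "(Id_proper :: ('a::comm_ring_1 \<Rightarrow> bool) set) = Id_plus \<inter> {P. \<not> P 1}"
  unfolding Id_proper_def Id_plus_def using ideal_proper_iff by blast

lemma Id_proper_closed: "closedin cantor_top (Id_proper :: ('a::comm_ring_1 \<Rightarrow> bool) set)"
  unfolding Id_proper_eq by (intro closedin_Int Id_plus_closed coord_closed_neg)

definition gen :: "('a::comm_ring_1) set \<Rightarrow> 'a set" where
  "gen F = \<Inter> {J. is_ideal J \<and> F \<subseteq> J}"

lemma gen_ideal: "is_ideal (gen F)"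
  unfolding gen_def is_ideal_def by auto

lemma gen_sub: "F \<subseteq> gen F"
  unfolding gen_def by auto

lemma gen_least: "is_ideal J \<Longrightarrow> F \<subseteq> J \<Longrightarrow> gen F \<subseteq> J"
  unfolding gen_def by auto

lemma gen_mono: "F \<subseteq> G \<Longrightarrow> gen F \<subseteq> gen G"
  unfolding gen_def by auto

lemma fin_gen:
  assumes N: "noetherian_ring TYPE('a::comm_ring_1)" and I: "is_ideal (I :: 'a set)"
  shows "\<exists>F. finite F \<and> F \<subseteq> I \<and> I \<subseteq> gen F"
proof (rule ccontr)
  assume H: "\<not> ?thesis"
  define ch where "ch = (\<lambda>F. SOME a. a \<in> I \<and> a \<notin> gen F)"
  have ch: "ch F \<in> I \<and> ch F \<notin> gen F" if "finite F" "F \<subseteq> I" for F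
  proof -
    from H that have "\<not> I \<subseteq> gen F" by blast
    then obtain a where "a \<in> I" "a \<notin> gen F" by blast
    then show ?thesis unfolding ch_def using someI[of "\<lambda>a. a \<in> I \<and> a \<notin> gen F" a] by blast
  qed
  define A where "A = rec_nat {} (\<lambda>n S. insert (ch S) S)"
  have A0: "A 0 = {}" and AS: "\<And>n. A (Suc n) = insert (ch (A n)) (A n)"
    by (simp_all add: A_def)
  have Afin: "finite (A n) \<and> A n \<subseteq> I" for n
    by (induction n) (auto simp: A0 AS ch)
  have "\<exists>N. \<forall>n\<ge>N. gen (A n) = gen (A N)"
  proof -
    have "\<forall>n. is_ideal (gen (A n))" by (simp add: gen_ideal)
    moreover have "\<forall>n. gen (A n) \<subseteq> gen (A (Suc n))" by (simp add: AS gen_mono subset_insertI)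
    ultimately show ?thesis using N unfolding noetherian_ring_def
      by (elim allE[of _ "\<lambda>n. gen (A n)"]) simp
  qed
  then obtain N where NN: "\<forall>n\<ge>N. gen (A n) = gen (A N)" by blast
  have e: "gen (A (Suc N)) = gen (A N)" using NN[rule_format, of "Suc N"] by simp
  have i: "ch (A N) \<in> gen (A (Suc N))" using gen_sub[of "A (Suc N)"] unfolding AS by blast
  have n: "ch (A N) \<notin> gen (A N)" using ch[of "A N"] Afin[of N] by simp
  show False using e i n by simp
qed

lemma down_open:
  assumes N: "noetherian_ring TYPE('a::comm_ring_1)"
    and S: "S \<subseteq> (Id_plus :: ('a \<Rightarrow> bool) set)"
    and D: "down_set_in S rev_incl D"
  shows "openin (tau_con S) D"
  unfolding openin_subopen[of _ D]
proof
  fix u assume u: "u \<in> D"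
  then have "is_ideal (Collect u)" using D S unfolding down_set_in_def Id_plus_def by auto
  then obtain F where F: "finite F" "F \<subseteq> Collect u" "Collect u \<subseteq> gen F"
    using fin_gen[OF N] by blast
  define V where "V = S \<inter> \<Inter> (insert UNIV ((\<lambda>a. {P. P a}) ` F))"
  have "openin (tau_con S) V" unfolding V_def tau_con_def
    by (intro openin_subtopology_Int2 openin_Inter) (auto simp: F coord_open, metis top_cantor openin_topspace)
  moreover have "u \<in> V" using u D F unfolding V_def down_set_in_def by auto
  moreover have "V \<subseteq> D"
  proof
    fix P assume P: "P \<in> V"
    then have "is_ideal (Collect P)" "F \<subseteq> Collect P" "P \<in> S"
      using S unfolding V_def Id_plus_def by auto
    then have "rev_incl P u" unfolding rev_incl_def using F gen_least by blast
    then show "P \<in> D" using D u \<open>P \<in> S\<close> unfolding down_set_in_def by blast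
  qed
  ultimately show "\<exists>T. openin (tau_con S) T \<and> u \<in> T \<and> T \<subseteq> D" by blast
qed

lemma main:
  assumes N: "noetherian_ring TYPE('a::comm_ring_1)"
    and S: "S \<subseteq> (Id_plus :: ('a \<Rightarrow> bool) set)"
    and Sc: "closedin cantor_top S"
  shows "noetherian_priestley_space (tau_con S) rev_incl"
proof -
  have top: "topspace (tau_con S) = S" by (simp add: tau_con_def)
  have cpt: "compact_space (tau_con S)" unfolding tau_con_def
    by (intro compact_space_subtopology closedin_compact_space cantor_compact Sc)
  have po: "partial_order_in S rev_incl"
    unfolding partial_order_in_def rev_incl_def by auto
  have sep: "\<exists>U. openin (tau_con S) U \<and> closedin (tau_con S) U \<and> down_set_in S rev_incl U \<and> x \<in> U \<and> y \<notin> U"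
    if "x \<in> S" "y \<in> S" "\<not> rev_incl y x" for x y
  proof -
    from that obtain a where a: "x a" "\<not> y a" unfolding rev_incl_def by auto
    show ?thesis
    proof (rule exI[of _ "S \<inter> {P. P a}"], intro conjI)
      show "openin (tau_con S) (S \<inter> {P. P a})" unfolding tau_con_def
        by (rule openin_subtopology_Int2[OF coord_open])
      show "closedin (tau_con S) (S \<inter> {P. P a})" unfolding tau_con_def
        by (rule closedin_subtopology_Int_closed[OF coord_closed])
      show "down_set_in S rev_incl (S \<inter> {P. P a})"
        unfolding down_set_in_def rev_incl_def by blast
      show "x \<in> S \<inter> {P. P a}" using that a by blast
      show "y \<notin> S \<inter> {P. P a}" using a by blast
    qed
  qed
  have noeth: "\<exists>N. \<forall>n\<ge>N. C n = C N"
    if C: "\<forall>n. closedin (tau_con S) (C n) \<and> down_set_in S rev_incl (C n)" "\<forall>n. C (Suc n) \<subseteq> C n"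
    for C :: "nat \<Rightarrow> ('a \<Rightarrow> bool) set"
  proof -
    define C0 where "C0 = (\<Inter>n. C n)"
    have "down_set_in S rev_incl C0" using C unfolding C0_def down_set_in_def by blast
    then have C0o: "openin (tau_con S) C0" by (rule down_open[OF N S])
    have dec: "decseq C" using C by (simp add: decseq_SucI)
    have "\<exists>n. C n - C0 = {}"
    proof (rule ccontr)
      assume ne: "\<nexists>n. C n - C0 = {}"
      have cl: "\<And>n. closedin (tau_con S) (C n - C0)" using C C0o by (simp add: closedin_diff)
      have dd: "decseq (\<lambda>n. C n - C0)" using dec by (auto simp: decseq_def)
      have "(\<Inter>n. C n - C0) \<noteq> {}"
        by (rule compact_space_imp_nest[OF cpt cl _ dd]) (use ne in blast)
      then show False unfolding C0_def by blast
    qed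
    then obtain M where "C M \<subseteq> C0" by blast
    then have "\<forall>n\<ge>M. C n = C M" using dec unfolding C0_def decseq_def by blast
    then show ?thesis by blast
  qed
  show ?thesis unfolding noetherian_priestley_space_def priestley_space_def top
    using po cpt sep noeth by blast
qed

theorem lemma3p18:
  assumes "noetherian_ring TYPE('a::comm_ring_1)"
  shows "noetherian_priestley_space (tau_con (Id_plus :: ('a \<Rightarrow> bool) set)) rev_incl
       \<and> noetherian_priestley_space (tau_con (Id_proper :: ('a \<Rightarrow> bool) set)) rev_incl"
proof -
  have "(Id_proper :: ('a \<Rightarrow> bool) set) \<subseteq> Id_plus" by (simp add: Id_proper_eq)
  then show ?thesis
    using main[OF assms order_refl Id_plus_closed] main[OF assms _ Id_proper_closed] by blast
qed

end
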